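(* Let $d\ge3$, $\{\mathbb{P}^u\}$ satisfy (P1), (P2), (D), (S1), (S2), fix $u$, $\eta=\eta(u)$. Let $\alpha\in(0,1/3)$, let $\omega$ be such that $\mathcal S_\infty$ is nonempty and connected and $R_{\mathrm{den}}(\omega,\alpha)<\infty$, and let $U_0\subseteq\mathcal S_\infty$. Let integers $\ell>\ell'$ satisfy $2^{\ell}>2^{\ell'}\ge R_{\mathrm{den}}(\omega,\alpha)$ and $r_{\alpha,2^{\ell'}}-2^\ell-2^{\ell'}>0$. (i) For any $x,x+y\in\mathcal S_\infty\cap B(0,r_{\alpha,2^\ell})$ connected by a path in $\mathcal S_\infty\cap B(0,r_{\alpha,2^\ell})$, $|\sigma^\omega_\ell(x)-\sigma^\omega_\ell(x+y)|\le c_{\mathrm{lip}}\widehat d_\omega(x,x+y)$ with $c_{\mathrm{lip}}=6\cdot2^{-\ell}/\eta$, where $\widehat d_\omega$ is the graph distance in $\mathcal S_\infty\cap B(0,r_{\alpha,2^\ell})$. (ii) For $x\in\mathcal S_\infty\cap B(0,r_{\alpha,2^{\ell'}}-2^\ell-2^{\ell'})$, $$(\sigma^\omega_{\ell'})^\omega_{x,\ell}\in\Big[\tfrac{1-\alpha}{1+\alpha}\sigma^\omega_\ell(x)-c_02^{\ell'-\ell},\ \tfrac{1+\alpha}{1-\alpha}\sigma^\omega_\ell(x)+c_02^{\ell'-\ell}\Big],\qquad c_0=\frac{3d\cdot2^{d-1}}{\eta}.$$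
   Context: Framework: $\Omega=\{0,1\}^{\mathbb{Z}^d}$; $\mathcal S=\{x:\omega(x)=1\}$ as nearest-neighbour subgraph; $\mathcal S_\infty$ vertices in infinite components; $B(x,r)$ closed $\ell^\infty$-ball in $\mathbb{Z}^d$. $\mathbb{P}^u$ satisfy (P1) ergodicity of shifts, (P2) monotonicity, (D) sprinkled decoupling $\mathbb{P}^u[A_1\cap A_2]\le\mathbb{P}^{u'}[A_1]\mathbb{P}^{u'}[A_2]+C\exp(-c\min\{(u'-u)^\beta s^\gamma,e^{(\log L)^\zeta}\})$ for increasing events depending on $B(x_i,L)$, $|x_1-x_2|_\infty=sL$, $u<u'$ (and reversed for decreasing events), (S1) local uniqueness with rate $f_S(u,R)\ge(\log R)^{1+\Delta_S(u)}$ (for large $R$; the events $\{\mathcal S_R\cap B(0,R)\ne\emptyset\}$ and $\{$all $x,y$ in $\mathcal S_{R/10}\cap B(0,R)$ connected in $\mathcal S\cap B(0,2R)\}$ have probability $\ge1-e^{-f_S(u,R)}$, $\mathcal S_r$ = vertices in components of $\ell^1$-diameter $\ge r$), (S2) $\eta(u)=\mathbb{P}^u[0\in\mathcal S_\infty]>0$ continuous. $\Delta_S=\Delta_S(u)$. Scales: $r_{\alpha,R}=\exp(\kappa_{\mathrm{reg}}(\alpha)(\log R)^{1+\Delta_S})$ with $\kappa_{\mathrm{reg}}(\alpha)>0$ a fixed function of $\alpha$ (namely $\frac1{2d}(\kappa_{d2}(\alpha)\wedge c_{hk6})$ for the volume large-deviation exponent $\kappa_{d2}$ and heat-kernel tail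 constant $c_{hk6}$). $R_{\mathrm{den}}(\omega,\alpha)=\inf\{R_0\ge1:\forall R\ge R_0,\forall x\in\mathcal S_\infty\cap B(0,r_{\alpha,R}),\ (1-\alpha)\eta\le|\mathcal S_\infty\cap B(x,R)|/|B(x,R)|\le(1+\alpha)\eta\}$. Densities: $U_1=\mathcal S_\infty\setminus U_0$; $\sigma^\omega_\ell(x)=|B(x,2^\ell)\cap U_1|/|B(x,2^\ell)\cap\mathcal S_\infty|$ for $x\in\mathbb{Z}^d$; for $f:\mathbb{Z}^d\to\mathbb{R}$, $(f)^\omega_{x,\ell}=|B(x,2^\ell)\cap\mathcal S_\infty|^{-1}\sum_{y\in B(x,2^\ell)\cap\mathcal S_\infty}f(y)$; convention $0/0=0$. *)

theory Defs
  imports "HOL-Probability.Probability"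
begin

section \<open>Lattice geometry on Z^d, with Z^d rendered as int ^ 'd (d = CARD('d))\<close>

type_synonym 'd config = "int ^ 'd \<Rightarrow> bool"

definition linf_ball :: "int ^ ('d::finite) \<Rightarrow> real \<Rightarrow> (int ^ 'd) set" where
  "linf_ball x r = {y. \<forall>i. real_of_int \<bar>y $ i - x $ i\<bar> \<le> r}"

definition linf_dist :: "int ^ ('d::finite) \<Rightarrow> int ^ 'd \<Rightarrow> int" where
  "linf_dist x y = Max (range (\<lambda>i. \<bar>x $ i - y $ i\<bar>))"

definition l1_dist :: "int ^ ('d::finite) \<Rightarrow> int ^ 'd \<Rightarrow> int" where
  "l1_dist x y = (\<Sum>i\<in>UNIV. \<bar>x $ i - y $ i\<bar>)"

definition nn_edges :: "(int ^ ('d::finite)) set \<Rightarrow> ((int ^ 'd) \<times> (int ^ 'd)) set" where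
  "nn_edges A = {(a, b). a \<in> A \<and> b \<in> A \<and> l1_dist a b = 1}"

definition conn_in :: "(int ^ ('d::finite)) set \<Rightarrow> int ^ 'd \<Rightarrow> int ^ 'd \<Rightarrow> bool" where
  "conn_in A x y \<longleftrightarrow> x \<in> A \<and> y \<in> A \<and> (x, y) \<in> (nn_edges A)\<^sup>*"

definition graph_dist :: "(int ^ ('d::finite)) set \<Rightarrow> int ^ 'd \<Rightarrow> int ^ 'd \<Rightarrow> nat" where
  "graph_dist A x y = (LEAST n. (x, y) \<in> (nn_edges A) ^^ n)"

definition set_connected :: "(int ^ ('d::finite)) set \<Rightarrow> bool" where
  "set_connected A \<longleftrightarrow> (\<forall>x\<in>A. \<forall>y\<in>A. conn_in A x y)"

definition occ :: "('d::finite) config \<Rightarrow> (int ^ 'd) set" where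
  "occ \<omega> = {x. \<omega> x}"

definition cluster :: "('d::finite) config \<Rightarrow> int ^ 'd \<Rightarrow> (int ^ 'd) set" where
  "cluster \<omega> x = {y. conn_in (occ \<omega>) x y}"

definition S_r :: "('d::finite) config \<Rightarrow> real \<Rightarrow> (int ^ 'd) set" where
  "S_r \<omega> r = {x \<in> occ \<omega>. \<exists>y\<in>cluster \<omega> x. \<exists>z\<in>cluster \<omega> x. real_of_int (l1_dist y z) \<ge> r}"

definition S_inf :: "('d::finite) config \<Rightarrow> (int ^ 'd) set" where
  "S_inf \<omega> = {x \<in> occ \<omega>. infinite (cluster \<omega> x)}"

definition shift :: "int ^ 'd \<Rightarrow> ('d::finite) config \<Rightarrow> 'd config" where
  "shift x \<omega> = (\<lambda>y. \<omega> (y + x))"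

definition increasing_event :: "('d::finite) config set \<Rightarrow> bool" where
  "increasing_event A \<longleftrightarrow> (\<forall>\<omega> \<omega>'. \<omega> \<in> A \<and> (\<forall>y. \<omega> y \<longrightarrow> \<omega>' y) \<longrightarrow> \<omega>' \<in> A)"

definition decreasing_event :: "('d::finite) config set \<Rightarrow> bool" where
  "decreasing_event A \<longleftrightarrow> (\<forall>\<omega> \<omega>'. \<omega>' \<in> A \<and> (\<forall>y. \<omega> y \<longrightarrow> \<omega>' y) \<longrightarrow> \<omega> \<in> A)"

definition depends_on :: "('d::finite) config set \<Rightarrow> (int ^ 'd) set \<Rightarrow> bool" where
  "depends_on A K \<longleftrightarrow> (\<forall>\<omega> \<omega>'. (\<forall>y\<in>K. \<omega> y = \<omega>' y) \<longrightarrow> (\<omega> \<in> A \<longleftrightarrow> \<omega>' \<in> A))"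

definition eta :: "(real \<Rightarrow> ('d::finite) config measure) \<Rightarrow> real \<Rightarrow> real" where
  "eta P u = measure (P u) {\<omega>. 0 \<in> S_inf \<omega>}"

definition config_measures :: "real set \<Rightarrow> (real \<Rightarrow> ('d::finite) config measure) \<Rightarrow> bool" where
  "config_measures U P \<longleftrightarrow> (\<forall>u\<in>U. prob_space (P u) \<and>
      sets (P u) = sets (Pi\<^sub>M UNIV (\<lambda>_. count_space (UNIV :: bool set))))"

definition axiom_P1 :: "real set \<Rightarrow> (real \<Rightarrow> ('d::finite) config measure) \<Rightarrow> bool" where
  "axiom_P1 U P \<longleftrightarrow> (\<forall>u\<in>U.
      (\<forall>x. \<forall>A\<in>sets (P u). measure (P u) (shift x -` A) = measure (P u) A) \<and>
      (\<forall>A\<in>sets (P u). (\<forall>x. shift x -` A = A) \<longrightarrow>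
          measure (P u) A = 0 \<or> measure (P u) A = 1))"

definition axiom_P2 :: "real set \<Rightarrow> (real \<Rightarrow> ('d::finite) config measure) \<Rightarrow> bool" where
  "axiom_P2 U P \<longleftrightarrow> (\<forall>u\<in>U. \<forall>u'\<in>U. u < u' \<longrightarrow>
      (\<forall>A\<in>sets (P u). increasing_event A \<longrightarrow> measure (P u) A \<le> measure (P u') A))"

definition decoupling_error :: "real \<Rightarrow> real \<Rightarrow> real \<Rightarrow> real \<Rightarrow> real \<Rightarrow> real \<Rightarrow> real \<Rightarrow> real \<Rightarrow> real" where
  "decoupling_error C c \<beta> \<gamma> \<zeta> du s L =
     C * exp (- c * min (du powr \<beta> * s powr \<gamma>) (exp (ln L powr \<zeta>)))"

definition axiom_D :: "real set \<Rightarrow> (real \<Rightarrow> ('d::finite) config measure) \<Rightarrow> bool" where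
  "axiom_D U P \<longleftrightarrow> (\<exists>C c \<beta> \<gamma> \<zeta> R_P L_P. C > 0 \<and> c > 0 \<and> \<beta> > 0 \<and> \<gamma> > 0 \<and> \<zeta> > 0 \<and>
     (\<forall>u\<in>U. \<forall>u'\<in>U. u < u' \<longrightarrow>
       (\<forall>(L::nat) s x1 x2 A1 A2. real L \<ge> L_P \<and> L \<ge> 1 \<and> s \<ge> R_P \<and>
          real_of_int (linf_dist x1 x2) = s * real L \<and>
          A1 \<in> sets (P u) \<and> A2 \<in> sets (P u) \<and>
          depends_on A1 (linf_ball x1 (real L)) \<and> depends_on A2 (linf_ball x2 (real L)) \<longrightarrow>
          (increasing_event A1 \<and> increasing_event A2 \<longrightarrow>
             measure (P u) (A1 \<inter> A2) \<le> measure (P u') A1 * measure (P u') A2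
               + decoupling_error C c \<beta> \<gamma> \<zeta> (u' - u) s (real L)) \<and>
          (decreasing_event A1 \<and> decreasing_event A2 \<longrightarrow>
             measure (P u') (A1 \<inter> A2) \<le> measure (P u) A1 * measure (P u) A2
               + decoupling_error C c \<beta> \<gamma> \<zeta> (u' - u) s (real L)))))"

definition LU_event1 :: "real \<Rightarrow> ('d::finite) config set" where
  "LU_event1 R = {\<omega>. S_r \<omega> R \<inter> linf_ball 0 R \<noteq> {}}"

definition LU_event2 :: "real \<Rightarrow> ('d::finite) config set" where
  "LU_event2 R = {\<omega>. \<forall>x\<in>S_r \<omega> (R / 10) \<inter> linf_ball 0 R. \<forall>y\<in>S_r \<omega> (R / 10) \<inter> linf_ball 0 R.
                        conn_in (occ \<omega> \<inter> linf_ball 0 (2 * R)) x y}"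

definition axiom_S1 :: "real set \<Rightarrow> (real \<Rightarrow> ('d::finite) config measure) \<Rightarrow> (real \<Rightarrow> real \<Rightarrow> real)
                         \<Rightarrow> (real \<Rightarrow> real) \<Rightarrow> bool" where
  "axiom_S1 U P f_S \<Delta>_S \<longleftrightarrow> (\<forall>u\<in>U. \<Delta>_S u > 0 \<and>
      (\<exists>R0. \<forall>R\<ge>R0. f_S u R \<ge> ln R powr (1 + \<Delta>_S u)) \<and>
      (\<forall>R\<ge>1. measure (P u) (LU_event1 R) \<ge> 1 - exp (- f_S u R) \<and>
              measure (P u) (LU_event2 R) \<ge> 1 - exp (- f_S u R)))"

definition axiom_S2 :: "real set \<Rightarrow> (real \<Rightarrow> ('d::finite) config measure) \<Rightarrow> bool" where
  "axiom_S2 U P \<longleftrightarrow> (\<forall>u\<in>U. eta P u > 0) \<and> continuous_on U (eta P)"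

definition r_scale :: "real \<Rightarrow> real \<Rightarrow> real \<Rightarrow> real" where
  "r_scale \<kappa> \<Delta> R = exp (\<kappa> * ln R powr (1 + \<Delta>))"

definition density_ok :: "real \<Rightarrow> real \<Rightarrow> real \<Rightarrow> real \<Rightarrow> ('d::finite) config \<Rightarrow> real \<Rightarrow> bool" where
  "density_ok \<eta> \<kappa> \<Delta> \<alpha> \<omega> R0 \<longleftrightarrow> R0 \<ge> 1 \<and> (\<forall>R\<ge>R0. \<forall>x\<in>S_inf \<omega> \<inter> linf_ball 0 (r_scale \<kappa> \<Delta> R).
      (1 - \<alpha>) * \<eta> \<le> real (card (S_inf \<omega> \<inter> linf_ball x R)) / real (card (linf_ball x R)) \<and>
      real (card (S_inf \<omega> \<inter> linf_ball x R)) / real (card (linf_ball x R)) \<le> (1 + \<alpha>) * \<eta>)"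

text \<open>R_den(omega, alpha) (an infimum; finiteness = the defining set is nonempty).\<close>
definition R_den :: "real \<Rightarrow> real \<Rightarrow> real \<Rightarrow> real \<Rightarrow> ('d::finite) config \<Rightarrow> real" where
  "R_den \<eta> \<kappa> \<Delta> \<alpha> \<omega> = Inf {R0. density_ok \<eta> \<kappa> \<Delta> \<alpha> \<omega> R0}"

definition R_den_finite :: "real \<Rightarrow> real \<Rightarrow> real \<Rightarrow> real \<Rightarrow> ('d::finite) config \<Rightarrow> bool" where
  "R_den_finite \<eta> \<kappa> \<Delta> \<alpha> \<omega> \<longleftrightarrow> (\<exists>R0. density_ok \<eta> \<kappa> \<Delta> \<alpha> \<omega> R0)"

text \<open>sigma_l(x) = |B(x,2^l) \<inter> U_1| / |B(x,2^l) \<inter> S_inf|, with U_1 = S_inf - U_0 (0/0 = 0).\<close>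
definition sigma :: "('d::finite) config \<Rightarrow> (int ^ 'd) set \<Rightarrow> int \<Rightarrow> int ^ 'd \<Rightarrow> real" where
  "sigma \<omega> U0 l x =
     real (card (linf_ball x (2 powr real_of_int l) \<inter> (S_inf \<omega> - U0)))
     / real (card (linf_ball x (2 powr real_of_int l) \<inter> S_inf \<omega>))"

text \<open>(f)_{x,l}: average of f over B(x,2^l) \<inter> S_inf (0/0 = 0).\<close>
definition avg :: "('d::finite) config \<Rightarrow> (int ^ 'd \<Rightarrow> real) \<Rightarrow> int ^ 'd \<Rightarrow> int \<Rightarrow> real" where
  "avg \<omega> f x l =
     (\<Sum>y\<in>linf_ball x (2 powr real_of_int l) \<inter> S_inf \<omega>. f y)
     / real (card (linf_ball x (2 powr real_of_int l) \<inter> S_inf \<omega>))"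

end

theory Submission
  imports Defs
begin


definition boxi :: "('d::finite \<Rightarrow> int) \<Rightarrow> ('d \<Rightarrow> int) \<Rightarrow> (int ^ 'd) set" where
  "boxi lo hi = {y. \<forall>i. lo i \<le> y $ i \<and> y $ i \<le> hi i}"

lemma boxi_bij: "bij_betw vec_nth (boxi lo hi) (PiE UNIV (\<lambda>i. {lo i..hi i}))"
proof (rule bij_betw_byWitness[where f'=vec_lambda])
  show "\<forall>a\<in>boxi lo hi. vec_lambda (vec_nth a) = a" by simp
  show "\<forall>a'\<in>PiE UNIV (\<lambda>i. {lo i..hi i}). vec_nth (vec_lambda a') = a'" using vec_lambda_inverse by auto
  show "vec_nth ` boxi lo hi \<subseteq> PiE UNIV (\<lambda>i. {lo i..hi i})" by (auto simp: boxi_def)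
  show "vec_lambda ` PiE UNIV (\<lambda>i. {lo i..hi i}) \<subseteq> boxi lo hi" by (auto simp: boxi_def PiE_def Pi_def)
qed

lemma boxi_card: "card (boxi lo hi) = (\<Prod>i\<in>UNIV. nat (hi i - lo i + 1))"
  using bij_betw_same_card[OF boxi_bij[of lo hi]] by (simp add: card_PiE)

lemma boxi_finite: "finite (boxi lo hi)"
  using bij_betw_finite[OF boxi_bij[of lo hi]] by (simp add: finite_PiE)

lemma ball_mem: "y \<in> linf_ball x r \<longleftrightarrow> (\<forall>i. real_of_int \<bar>y $ i - x $ i\<bar> \<le> r)"
  unfolding linf_ball_def by (simp del: of_int_abs)

lemma ball_mem_nat: "y \<in> linf_ball x (real k) \<longleftrightarrow> (\<forall>i. \<bar>y $ i - x $ i\<bar> \<le> int k)"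
  unfolding ball_mem by (metis of_int_le_iff of_int_of_nat_eq)

lemma ball_boxi: "linf_ball x (real k) = boxi (\<lambda>i. x $ i - int k) (\<lambda>i. x $ i + int k)"
proof -
  have e: "\<And>a b. (\<bar>a - b\<bar> \<le> int k) = (b - int k \<le> a \<and> a \<le> b + int k)" for a b :: int by arith
  show ?thesis unfolding boxi_def by (simp add: ball_mem_nat e set_eq_iff)
qed

lemma ball_card: "card (linf_ball (x::int^'d::finite) (real k)) = (2*k+1) ^ CARD('d)"
  unfolding ball_boxi boxi_card by (simp add: nat_add_distrib nat_mult_distrib)

lemma ball_floor: "linf_ball x r = linf_ball x (real_of_int \<lfloor>r\<rfloor>)"
  unfolding linf_ball_def by (metis (no_types, opaque_lifting) le_floor_iff of_int_le_iff)

lemma ball_mono: "r \<le> s \<Longrightarrow> linf_ball x r \<subseteq> linf_ball x s"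
  unfolding ball_mem subset_iff by (metis order_trans)

lemma ball_finite: "finite (linf_ball x r)"
proof -
  have "linf_ball x r \<subseteq> linf_ball x (real (nat \<lfloor>r\<rfloor>))"
    by (metis ball_floor ball_mono of_int_le_iff of_nat_nat nat_0_le le_nat_iff order_refl nle_le int_nat_eq of_int_of_nat_eq of_nat_nat)
  then show ?thesis using boxi_finite ball_boxi finite_subset by metis
qed

lemma ball_sym: "y \<in> linf_ball x r \<longleftrightarrow> x \<in> linf_ball y r"
  unfolding ball_mem by (simp add: abs_minus_commute)

lemma ball_trans: "y \<in> linf_ball x a \<Longrightarrow> w \<in> linf_ball y b \<Longrightarrow> w \<in> linf_ball x (a + b)"
  unfolding ball_mem
proof (intro allI)
  fix i
  assume a: "\<forall>i. real_of_int \<bar>y $ i - x $ i\<bar> \<le> a" and b: "\<forall>i. real_of_int \<bar>w $ i - y $ i\<bar> \<le> b"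
  have "\<bar>w $ i - x $ i\<bar> \<le> \<bar>w $ i - y $ i\<bar> + \<bar>y $ i - x $ i\<bar>" by arith
  then have "real_of_int \<bar>w $ i - x $ i\<bar> \<le> real_of_int \<bar>w $ i - y $ i\<bar> + real_of_int \<bar>y $ i - x $ i\<bar>"
    by (metis of_int_add of_int_le_iff)
  moreover have "real_of_int \<bar>y $ i - x $ i\<bar> \<le> a" using a by blast
  moreover have "real_of_int \<bar>w $ i - y $ i\<bar> \<le> b" using b by blast
  ultimately show "real_of_int \<bar>w $ i - x $ i\<bar> \<le> a + b" by linarith
qed

lemma ball_self: "r \<ge> 0 \<Longrightarrow> x \<in> linf_ball x r"
  unfolding ball_mem by auto



lemma l1_one:
  fixes a b :: "int ^ 'd::finite"
  assumes "l1_dist a b = 1"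
  obtains j where "\<And>i. i \<noteq> j \<Longrightarrow> a $ i = b $ i" "\<bar>a $ j - b $ j\<bar> = 1"
proof -
  have "\<exists>j. a $ j \<noteq> b $ j"
  proof (rule ccontr)
    assume "\<not> ?thesis"
    then have "l1_dist a b = 0" unfolding l1_dist_def by simp
    then show False using assms by simp
  qed
  then obtain j where j: "a $ j \<noteq> b $ j" by blast
  have le: "\<bar>a $ j - b $ j\<bar> \<le> 1"
    using member_le_sum[of j UNIV "\<lambda>i. \<bar>a $ i - b $ i\<bar>"] assms unfolding l1_dist_def by simp
  have ge: "\<bar>a $ j - b $ j\<bar> \<ge> 1" using j by arith
  have oth: "a $ i = b $ i" if "i \<noteq> j" for i
  proof -
    have "(\<Sum>k\<in>{i,j}. \<bar>a $ k - b $ k\<bar>) \<le> (\<Sum>k\<in>UNIV. \<bar>a $ k - b $ k\<bar>)"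
      by (rule sum_mono2) auto
    then have "\<bar>a $ i - b $ i\<bar> + \<bar>a $ j - b $ j\<bar> \<le> 1"
      using that assms unfolding l1_dist_def by simp
    then show ?thesis using ge by arith
  qed
  show ?thesis using that oth le ge by force
qed

lemma slab_card:
  fixes a b :: "int ^ 'd::finite"
  assumes "l1_dist a b = 1"
  shows "card (linf_ball a (real k) - linf_ball b (real k)) \<le> (2*k+1) ^ (CARD('d) - 1)"
proof -
  obtain j where oth: "\<And>i. i \<noteq> j \<Longrightarrow> a $ i = b $ i" and j1: "\<bar>a $ j - b $ j\<bar> = 1"
    using l1_one[OF assms] by blast
  define c where "c = a $ j - (b $ j - a $ j) * int k"
  define lo where "lo = (\<lambda>i. if i = j then c else a $ i - int k)"
  define hi where "hi = (\<lambda>i. if i = j then c else a $ i + int k)"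
  have sub: "linf_ball a (real k) - linf_ball b (real k) \<subseteq> boxi lo hi"
  proof
    fix y assume y: "y \<in> linf_ball a (real k) - linf_ball b (real k)"
    then have ya: "\<forall>i. \<bar>y $ i - a $ i\<bar> \<le> int k" by (simp add: ball_mem_nat)
    from y obtain i where yi: "\<bar>y $ i - b $ i\<bar> > int k" by (auto simp: ball_mem_nat not_le)
    have "i = j"
    proof (rule ccontr)
      assume "i \<noteq> j"
      then have "b $ i = a $ i" using oth by metis
      then show False using ya[rule_format, of i] yi by simp
    qed
    then have yj: "\<bar>y $ j - b $ j\<bar> > int k" using yi by simp
    have "y $ j = c"
    proof (cases "b $ j = a $ j + 1")
      case True
      then show ?thesis using yj ya[rule_format, of j] unfolding c_def by auto
    next
      case False
      then have "b $ j = a $ j - 1" using j1 by arith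
      then show ?thesis using yj ya[rule_format, of j] unfolding c_def by auto
    qed
    then have "\<forall>i. lo i \<le> y $ i \<and> y $ i \<le> hi i"
    proof (intro allI)
      fix i assume "y $ j = c"
      then show "lo i \<le> y $ i \<and> y $ i \<le> hi i"
        using ya[rule_format, of i] by (auto simp: lo_def hi_def abs_le_iff)
    qed
    then show "y \<in> boxi lo hi" unfolding boxi_def by simp
  qed
  have "card (boxi lo hi) = (\<Prod>i\<in>UNIV. if i = j then 1 else 2*k+1)"
    unfolding boxi_card lo_def hi_def by (intro prod.cong) (auto simp: nat_add_distrib nat_mult_distrib)
  also have "\<dots> = (\<Prod>i\<in>UNIV - {j}. if i = j then 1 else 2*k+1)"
    by (subst prod.remove[of UNIV j]) auto
  also have "\<dots> = (\<Prod>i\<in>UNIV - {j}. 2*k+1)" by (intro prod.cong) auto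
  also have "\<dots> = (2*k+1) ^ (CARD('d) - 1)" by (simp add: card_Diff_singleton)
  finally show ?thesis using card_mono[OF boxi_finite sub] by simp
qed

lemma pow_diff_le:
  fixes a b :: real
  assumes "0 \<le> b" "b \<le> a"
  shows "a ^ Suc n - b ^ Suc n \<le> real (Suc n) * (a - b) * a ^ n"
proof (induction n)
  case 0 then show ?case by simp
next
  case (Suc n)
  have "a ^ Suc (Suc n) - b ^ Suc (Suc n) = a * (a ^ Suc n - b ^ Suc n) + (a - b) * b ^ Suc n"
    by (simp add: algebra_simps)
  also have "\<dots> \<le> a * (real (Suc n) * (a - b) * a ^ n) + (a - b) * a ^ Suc n"
  proof (rule add_mono)
    show "a * (a ^ Suc n - b ^ Suc n) \<le> a * (real (Suc n) * (a - b) * a ^ n)"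
      using Suc assms by (intro mult_left_mono) auto
    show "(a - b) * b ^ Suc n \<le> (a - b) * a ^ Suc n"
      using assms by (intro mult_left_mono power_mono) auto
  qed
  also have "\<dots> = real (Suc (Suc n)) * (a - b) * a ^ Suc n" by (simp add: algebra_simps)
  finally show ?case .
qed

lemma sum_card_swap:
  assumes "finite Y" "finite W"
  shows "(\<Sum>y\<in>Y. card {w\<in>W. R y w}) = (\<Sum>w\<in>W. card {y\<in>Y. R y w})"
proof -
  have c1: "card {w\<in>W. R y w} = (\<Sum>w\<in>W. if R y w then 1 else 0)" for y
    using assms by (simp add: sum.inter_filter[symmetric])
  have c2: "card {y\<in>Y. R y w} = (\<Sum>y\<in>Y. if R y w then 1 else 0)" for w
    using assms by (simp add: sum.inter_filter[symmetric])
  show ?thesis unfolding c1 c2 by (rule sum.swap)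
qed

lemma ratio_lip:
  fixes Aa Ab Na Nb s N0 :: real
  assumes "0 \<le> Ab" "Ab \<le> Nb" "\<bar>Aa - Ab\<bar> \<le> s" "\<bar>Na - Nb\<bar> \<le> s" "N0 > 0" "Na \<ge> N0" "Nb \<ge> N0"
  shows "\<bar>Aa / Na - Ab / Nb\<bar> \<le> 2 * s / N0"
proof -
  have pa: "Na > 0" "Nb > 0" using assms by auto
  have eq: "Aa / Na - Ab / Nb = ((Aa - Ab) * Nb + Ab * (Nb - Na)) / (Na * Nb)"
    using pa by (simp add: field_simps)
  have "\<bar>(Aa - Ab) * Nb\<bar> \<le> s * Nb" using assms pa by (simp add: abs_mult mult_right_mono)
  moreover have "\<bar>Ab * (Nb - Na)\<bar> \<le> Nb * s" using assms pa
    by (simp add: abs_mult abs_minus_commute mult_mono)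
  moreover have "Nb * s = s * Nb" by simp
  ultimately have num0: "\<bar>(Aa - Ab) * Nb + Ab * (Nb - Na)\<bar> \<le> s * Nb + s * Nb"
    using abs_triangle_ineq[of "(Aa - Ab) * Nb" "Ab * (Nb - Na)"] by linarith
  have num: "\<bar>(Aa - Ab) * Nb + Ab * (Nb - Na)\<bar> \<le> 2 * s * Nb" using num0 by (simp add: algebra_simps)
  have "\<bar>Aa / Na - Ab / Nb\<bar> = \<bar>(Aa - Ab) * Nb + Ab * (Nb - Na)\<bar> / (Na * Nb)"
    using pa by (simp add: eq abs_divide abs_mult)
  also have "\<dots> \<le> 2 * s * Nb / (Na * Nb)" by (rule divide_right_mono) (use num pa in auto)
  also have "\<dots> = 2 * s / Na" using pa by simp
  also have "\<dots> \<le> 2 * s / N0" using assms pa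
    by (intro divide_left_mono) (auto intro: mult_pos_pos)
  finally show ?thesis .
qed



lemma rscale_mono:
  assumes "\<kappa> > 0" "\<Delta> > 0" "1 \<le> a" "a \<le> b"
  shows "r_scale \<kappa> \<Delta> a \<le> r_scale \<kappa> \<Delta> b"
proof -
  have "ln a \<le> ln b" "0 \<le> ln a" using assms by auto
  then have "ln a powr (1 + \<Delta>) \<le> ln b powr (1 + \<Delta>)"
    using assms by (intro powr_mono2) auto
  then show ?thesis unfolding r_scale_def using assms by simp
qed

lemma density_at:
  fixes \<omega> :: "('d::finite) config"
  assumes fin: "R_den_finite \<eta> \<kappa> \<Delta> \<alpha> \<omega>" and Rk: "real k \<ge> R_den \<eta> \<kappa> \<Delta> \<alpha> \<omega>"
    and kp: "\<kappa> > 0" and dp: "\<Delta> > 0"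
    and x: "x \<in> S_inf \<omega>" "x \<in> linf_ball 0 (r_scale \<kappa> \<Delta> (real k))"
  shows "k \<ge> 1 \<and> (1 - \<alpha>) * \<eta> * real ((2*k+1) ^ CARD('d)) \<le> real (card (S_inf \<omega> \<inter> linf_ball x (real k)))
     \<and> real (card (S_inf \<omega> \<inter> linf_ball x (real k))) \<le> (1 + \<alpha>) * \<eta> * real ((2*k+1) ^ CARD('d))"
proof -
  define D where "D = {R0. density_ok \<eta> \<kappa> \<Delta> \<alpha> \<omega> R0}"
  have Dne: "D \<noteq> {}" using fin unfolding R_den_finite_def D_def by blast
  have bdd: "bdd_below D" unfolding D_def density_ok_def bdd_below_def by auto
  have "Inf D < real k + 1/2" using Rk unfolding R_den_def D_def[symmetric] by simp
  then obtain R1 where R1: "R1 \<in> D" "R1 < real k + 1/2" using cInf_lessD Dne by blast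
  have R1ge: "R1 \<ge> 1" and dok: "\<forall>R\<ge>R1. \<forall>x\<in>S_inf \<omega> \<inter> linf_ball 0 (r_scale \<kappa> \<Delta> R).
      (1 - \<alpha>) * \<eta> \<le> real (card (S_inf \<omega> \<inter> linf_ball x R)) / real (card (linf_ball x R)) \<and>
      real (card (S_inf \<omega> \<inter> linf_ball x R)) / real (card (linf_ball x R)) \<le> (1 + \<alpha>) * \<eta>"
    using R1(1) unfolding D_def density_ok_def by simp_all
  have k1: "k \<ge> 1" using R1ge R1(2) by linarith
  define R where "R = max R1 (real k)"
  have RR1: "R \<ge> R1" and Rk1: "real k \<le> R" and Rk2: "R < real k + 1/2" using R1 unfolding R_def by auto
  have fl: "\<lfloor>R\<rfloor> = int k" using Rk1 Rk2 by (intro floor_unique) auto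
  have bx: "linf_ball y R = linf_ball y (real k)" for y
    using ball_floor[of y R] fl by simp
  have "r_scale \<kappa> \<Delta> (real k) \<le> r_scale \<kappa> \<Delta> R" using kp dp k1 Rk1 by (intro rscale_mono) auto
  then have "x \<in> S_inf \<omega> \<inter> linf_ball 0 (r_scale \<kappa> \<Delta> R)" using x ball_mono by blast
  then have h: "(1 - \<alpha>) * \<eta> \<le> real (card (S_inf \<omega> \<inter> linf_ball x (real k))) / real ((2*k+1) ^ CARD('d)) \<and>
      real (card (S_inf \<omega> \<inter> linf_ball x (real k))) / real ((2*k+1) ^ CARD('d)) \<le> (1 + \<alpha>) * \<eta>"
  proof -
    from dok RR1 have "\<forall>x\<in>S_inf \<omega> \<inter> linf_ball 0 (r_scale \<kappa> \<Delta> R).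
      (1 - \<alpha>) * \<eta> \<le> real (card (S_inf \<omega> \<inter> linf_ball x R)) / real (card (linf_ball x R)) \<and>
      real (card (S_inf \<omega> \<inter> linf_ball x R)) / real (card (linf_ball x R)) \<le> (1 + \<alpha>) * \<eta>" by blast
    then have "(1 - \<alpha>) * \<eta> \<le> real (card (S_inf \<omega> \<inter> linf_ball x R)) / real (card (linf_ball x R)) \<and>
      real (card (S_inf \<omega> \<inter> linf_ball x R)) / real (card (linf_ball x R)) \<le> (1 + \<alpha>) * \<eta>"
      using \<open>x \<in> S_inf \<omega> \<inter> linf_ball 0 (r_scale \<kappa> \<Delta> R)\<close> by (rule bspec)
    then show ?thesis by (simp only: bx ball_card)
  qed
  have pos: "real ((2*k+1) ^ CARD('d)) > 0" by simp
  show ?thesis using h k1 pos by (simp add: pos_le_divide_eq pos_divide_le_eq del: of_nat_power)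
qed



lemma card_ball_shift:
  "card (linf_ball (a::int^'d::finite) r \<inter> X) \<le> card (linf_ball b r \<inter> X) + card (linf_ball a r - linf_ball b r)"
proof -
  have "linf_ball a r \<inter> X \<subseteq> (linf_ball b r \<inter> X) \<union> (linf_ball a r - linf_ball b r)" by blast
  then have "card (linf_ball a r \<inter> X) \<le> card ((linf_ball b r \<inter> X) \<union> (linf_ball a r - linf_ball b r))"
    by (intro card_mono) (auto intro: ball_finite)
  also have "\<dots> \<le> card (linf_ball b r \<inter> X) + card (linf_ball a r - linf_ball b r)" by (rule card_Un_le)
  finally show ?thesis .
qed

lemma l1_sym: "l1_dist a b = l1_dist b a"
  unfolding l1_dist_def by (simp add: abs_minus_commute)

lemma path_lip:
  assumes "\<And>a b. (a, b) \<in> E \<Longrightarrow> \<bar>f a - f b\<bar> \<le> (c::real)"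
  shows "(x, z) \<in> E ^^ n \<Longrightarrow> \<bar>f x - f z\<bar> \<le> c * real n"
proof (induction n arbitrary: z)
  case 0 then show ?case by simp
next
  case (Suc n)
  then obtain y where y: "(x, y) \<in> E ^^ n" "(y, z) \<in> E" by auto
  have "\<bar>f x - f z\<bar> \<le> \<bar>f x - f y\<bar> + \<bar>f y - f z\<bar>" by arith
  also have "\<dots> \<le> c * real n + c" using Suc.IH[OF y(1)] assms[OF y(2)] by linarith
  finally show ?case by (simp add: algebra_simps)
qed

lemma edge_arith:
  fixes \<alpha> \<eta> :: real and m d :: nat
  assumes "0 < \<alpha>" "\<alpha> < 1/3" "\<eta> > 0" "m \<ge> 1" "d \<ge> 1"
  shows "2 * real ((2*m+1)^(d-1)) / ((1 - \<alpha>) * \<eta> * real ((2*m+1)^d)) \<le> 6 / (\<eta> * real m)"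
proof -
  have pw: "real ((2*m+1)^d) = real ((2*m+1)^(d-1)) * (2 * real m + 1)"
  proof -
    obtain d' where "d = Suc d'" using assms(5) by (cases d) auto
    then show ?thesis by (simp add: algebra_simps)
  qed
  have q: "real ((2*m+1)^(d-1)) > 0" by simp
  have "2 * real ((2*m+1)^(d-1)) / ((1 - \<alpha>) * \<eta> * real ((2*m+1)^d)) = 2 / ((1 - \<alpha>) * \<eta> * (2 * real m + 1))"
  proof -
    have "(1 - \<alpha>) * \<eta> * real ((2*m+1)^d) = real ((2*m+1)^(d-1)) * ((1 - \<alpha>) * \<eta> * (2 * real m + 1))"
      unfolding pw by (simp add: algebra_simps)
    moreover have "\<And>Q Z::real. Q > 0 \<Longrightarrow> 2 * Q / (Q * Z) = 2 / Z" by simp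
    ultimately show ?thesis using q by metis
  qed
  also have "\<dots> \<le> 2 / (\<eta> * real m / 3)"
  proof (rule divide_left_mono)
    have "(2/3) * (2 * real m + 1) \<le> (1 - \<alpha>) * (2 * real m + 1)"
      using assms by (intro mult_right_mono) auto
    moreover have "(2/3) * (2 * real m + 1) = 4/3 * real m + 2/3" by (simp add: algebra_simps)
    ultimately have "real m / 3 \<le> (1 - \<alpha>) * (2 * real m + 1)" by linarith
    then show "\<eta> * real m / 3 \<le> (1 - \<alpha>) * \<eta> * (2 * real m + 1)"
      using assms mult_left_mono[of "real m / 3" "(1 - \<alpha>) * (2 * real m + 1)" \<eta>] by (simp add: algebra_simps)
    show "0 < (1 - \<alpha>) * \<eta> * (2 * real m + 1) * (\<eta> * real m / 3)" using assms by simp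
  qed simp
  also have "\<dots> = 6 / (\<eta> * real m)" by simp
  finally show ?thesis .
qed



lemma part_i:
  fixes \<omega> :: "('d::finite) config" and U0 :: "(int^'d) set" and l :: int and m :: nat
  assumes fin: "R_den_finite \<eta> \<kappa> \<Delta> \<alpha> \<omega>" and Rm: "real m \<ge> R_den \<eta> \<kappa> \<Delta> \<alpha> \<omega>"
    and kp: "\<kappa> > 0" and dp: "\<Delta> > 0" and ep: "\<eta> > 0" and al: "0 < \<alpha>" "\<alpha> < 1/3"
    and lm: "2 powr real_of_int l = real m"
  shows "\<forall>x z. x \<in> S_inf \<omega> \<inter> linf_ball 0 (r_scale \<kappa> \<Delta> (real m)) \<and>
           z \<in> S_inf \<omega> \<inter> linf_ball 0 (r_scale \<kappa> \<Delta> (real m)) \<and>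
           conn_in (S_inf \<omega> \<inter> linf_ball 0 (r_scale \<kappa> \<Delta> (real m))) x z
       \<longrightarrow> \<bar>sigma \<omega> U0 l x - sigma \<omega> U0 l z\<bar>
           \<le> (6 * 2 powr (- real_of_int l) / \<eta>)
              * real (graph_dist (S_inf \<omega> \<inter> linf_ball 0 (r_scale \<kappa> \<Delta> (real m))) x z)"
proof (intro allI impI)
  define A where "A = S_inf \<omega> \<inter> linf_ball 0 (r_scale \<kappa> \<Delta> (real m))"
  define S where "S = S_inf \<omega>"
  define s where "s = (2*m+1) ^ (CARD('d) - 1)"
  define N0 where "N0 = (1 - \<alpha>) * \<eta> * real ((2*m+1) ^ CARD('d))"
  have sig: "sigma \<omega> U0 l y = real (card (linf_ball y (real m) \<inter> (S - U0))) / real (card (linf_ball y (real m) \<inter> S))" for y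
    unfolding sigma_def lm S_def ..
  have c: "6 * 2 powr (- real_of_int l) / \<eta> = 6 / (\<eta> * real m)"
    by (simp add: powr_minus lm divide_inverse)
  have dens: "m \<ge> 1 \<and> N0 \<le> real (card (linf_ball y (real m) \<inter> S))" if "y \<in> A" for y
    using density_at[OF fin Rm kp dp, of y] that unfolding A_def N0_def S_def by (simp add: Int_commute)
  have edge: "\<bar>sigma \<omega> U0 l a - sigma \<omega> U0 l b\<bar> \<le> 6 / (\<eta> * real m)" if ab: "(a, b) \<in> nn_edges A" for a b
  proof -
    have a: "a \<in> A" and b: "b \<in> A" and l1: "l1_dist a b = 1" using ab unfolding nn_edges_def by auto
    have l1': "l1_dist b a = 1" using l1 l1_sym by metis
    have m1: "m \<ge> 1" using dens[OF a] by blast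
    have N0p: "N0 > 0" unfolding N0_def using al ep by simp
    let ?Ba = "linf_ball a (real m)" and ?Bb = "linf_ball b (real m)"
    have sab: "card (?Ba - ?Bb) \<le> s" "card (?Bb - ?Ba) \<le> s" unfolding s_def
      using slab_card[OF l1] slab_card[OF l1'] by auto
    have X: "\<bar>real (card (?Ba \<inter> X)) - real (card (?Bb \<inter> X))\<bar> \<le> real s" for X
      using card_ball_shift[of a "real m" X b] card_ball_shift[of b "real m" X a] sab by linarith
    have "\<bar>real (card (?Ba \<inter> (S - U0))) / real (card (?Ba \<inter> S)) - real (card (?Bb \<inter> (S - U0))) / real (card (?Bb \<inter> S))\<bar>
          \<le> 2 * real s / N0"
    proof (rule ratio_lip)
      show "real (card (?Bb \<inter> (S - U0))) \<le> real (card (?Bb \<inter> S))"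
        using card_mono[of "?Bb \<inter> S" "?Bb \<inter> (S - U0)"] ball_finite[of b "real m"] by auto
    qed (use X dens[OF a] dens[OF b] N0p in auto)
    also have "\<dots> \<le> 6 / (\<eta> * real m)" unfolding s_def N0_def
      using edge_arith[OF al ep m1, of "CARD('d)"] by simp
    finally show ?thesis unfolding sig .
  qed
  fix x z
  assume xz: "x \<in> S_inf \<omega> \<inter> linf_ball 0 (r_scale \<kappa> \<Delta> (real m)) \<and>
           z \<in> S_inf \<omega> \<inter> linf_ball 0 (r_scale \<kappa> \<Delta> (real m)) \<and>
           conn_in (S_inf \<omega> \<inter> linf_ball 0 (r_scale \<kappa> \<Delta> (real m))) x z"
  then have "(x, z) \<in> (nn_edges A)\<^sup>*" unfolding A_def conn_in_def by blast
  then have "\<exists>n. (x, z) \<in> nn_edges A ^^ n" by (simp add: rtrancl_power)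
  then have "(x, z) \<in> nn_edges A ^^ graph_dist A x z" unfolding graph_dist_def by (rule LeastI_ex)
  then have "\<bar>sigma \<omega> U0 l x - sigma \<omega> U0 l z\<bar> \<le> 6 / (\<eta> * real m) * real (graph_dist A x z)"
    using path_lip[of "nn_edges A" "sigma \<omega> U0 l" "6 / (\<eta> * real m)"] edge by blast
  then show "\<bar>sigma \<omega> U0 l x - sigma \<omega> U0 l z\<bar>
           \<le> (6 * 2 powr (- real_of_int l) / \<eta>)
              * real (graph_dist (S_inf \<omega> \<inter> linf_ball 0 (r_scale \<kappa> \<Delta> (real m))) x z)"
    unfolding c A_def .
qed



lemma lower_arith:
  fixes \<alpha> \<eta> Nx Ax ann nm T P avg :: real
  assumes al: "0 < \<alpha>" "\<alpha> < 1/3" and ep: "\<eta> > 0" and nm: "nm > 0"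
    and Nx: "(1 - \<alpha>) * \<eta> * nm \<le> Nx" and ann: "ann \<le> T * nm" and T: "T \<ge> 0" and P: "P \<ge> 1"
    and avg: "(1 - \<alpha>) / (1 + \<alpha>) * ((Ax - ann) / Nx) \<le> avg"
  shows "(1 - \<alpha>) / (1 + \<alpha>) * (Ax / Nx) - 3 * P * T / \<eta> \<le> avg"
proof -
  have N0: "(1 - \<alpha>) * \<eta> * nm > 0" using al ep nm by simp
  then have Nxp: "Nx > 0" using Nx by linarith
  have "ann / Nx \<le> T * nm / Nx" using ann Nxp by (simp add: divide_right_mono)
  also have "\<dots> \<le> T * nm / ((1 - \<alpha>) * \<eta> * nm)"
    using Nx N0 T nm by (intro divide_left_mono) auto
  also have "\<dots> = T / ((1 - \<alpha>) * \<eta>)" using nm by simp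
  finally have h1: "ann / Nx \<le> T / ((1 - \<alpha>) * \<eta>)" .
  have fpos: "(1 - \<alpha>) / (1 + \<alpha>) \<ge> 0" using al by simp
  have "(1 - \<alpha>) / (1 + \<alpha>) * (ann / Nx) \<le> (1 - \<alpha>) / (1 + \<alpha>) * (T / ((1 - \<alpha>) * \<eta>))"
    using h1 fpos by (rule mult_left_mono)
  also have "\<dots> = ((1 - \<alpha>) * T) / ((1 - \<alpha>) * ((1 + \<alpha>) * \<eta>))" by (simp add: ac_simps)
  also have "\<dots> = T / ((1 + \<alpha>) * \<eta>)" using al by (intro mult_divide_mult_cancel_left) auto
  also have "\<dots> \<le> T / \<eta>" using al ep T by (intro divide_left_mono) auto
  also have "\<dots> \<le> 3 * P * T / \<eta>"
  proof (rule divide_right_mono)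
    have "1 * T \<le> (3 * P) * T" using P T by (intro mult_right_mono) auto
    then show "T \<le> 3 * P * T" by simp
  qed (use ep in simp)
  finally have h2: "(1 - \<alpha>) / (1 + \<alpha>) * (ann / Nx) \<le> 3 * P * T / \<eta>" .
  have "(1 - \<alpha>) / (1 + \<alpha>) * ((Ax - ann) / Nx) = (1 - \<alpha>) / (1 + \<alpha>) * (Ax / Nx) - (1 - \<alpha>) / (1 + \<alpha>) * (ann / Nx)"
    by (simp add: diff_divide_distrib right_diff_distrib)
  then show ?thesis using h2 avg by linarith
qed

lemma upper_arith:
  fixes \<alpha> \<eta> Nx Ax ann nm T P avg :: real
  assumes al: "0 < \<alpha>" "\<alpha> < 1/3" and ep: "\<eta> > 0" and nm: "nm > 0"
    and Nx: "(1 - \<alpha>) * \<eta> * nm \<le> Nx" and ann: "ann \<le> P * T * nm" and T: "T \<ge> 0" and P: "P \<ge> 1"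
    and avg: "avg \<le> (1 + \<alpha>) / (1 - \<alpha>) * ((Ax + ann) / Nx)"
  shows "avg \<le> (1 + \<alpha>) / (1 - \<alpha>) * (Ax / Nx) + 3 * P * T / \<eta>"
proof -
  have N0: "(1 - \<alpha>) * \<eta> * nm > 0" using al ep nm by simp
  then have Nxp: "Nx > 0" using Nx by linarith
  have PT: "P * T \<ge> 0" using P T by simp
  have "ann / Nx \<le> P * T * nm / Nx" using ann Nxp by (simp add: divide_right_mono)
  also have "\<dots> \<le> P * T * nm / ((1 - \<alpha>) * \<eta> * nm)"
    using Nx N0 PT nm by (intro divide_left_mono) auto
  also have "\<dots> = P * T / ((1 - \<alpha>) * \<eta>)" using nm by simp
  finally have h1: "ann / Nx \<le> P * T / ((1 - \<alpha>) * \<eta>)" .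
  have fpos: "(1 + \<alpha>) / (1 - \<alpha>) \<ge> 0" using al by simp
  have "(1 + \<alpha>) / (1 - \<alpha>) * (ann / Nx) \<le> (1 + \<alpha>) / (1 - \<alpha>) * (P * T / ((1 - \<alpha>) * \<eta>))"
    using h1 fpos by (rule mult_left_mono)
  also have "\<dots> = ((1 + \<alpha>) / (1 - \<alpha>)^2) * (P * T / \<eta>)" using al by (simp add: field_simps power2_eq_square)
  also have "\<dots> \<le> 3 * (P * T / \<eta>)"
  proof (rule mult_right_mono)
    have "(2/3) * (2/3) \<le> (1 - \<alpha>) * (1 - \<alpha>)" using al by (intro mult_mono) auto
    then have "4/3 \<le> 3 * (1 - \<alpha>)^2" by (simp add: power2_eq_square)
    then have "1 + \<alpha> \<le> 3 * (1 - \<alpha>)^2" using al by linarith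
    then show "(1 + \<alpha>) / (1 - \<alpha>)^2 \<le> 3" using al by (simp add: divide_le_eq)
    show "0 \<le> P * T / \<eta>" using PT ep by simp
  qed
  finally have h2: "(1 + \<alpha>) / (1 - \<alpha>) * (ann / Nx) \<le> 3 * P * T / \<eta>" by simp
  have "(1 + \<alpha>) / (1 - \<alpha>) * ((Ax + ann) / Nx) = (1 + \<alpha>) / (1 - \<alpha>) * (Ax / Nx) + (1 + \<alpha>) / (1 - \<alpha>) * (ann / Nx)"
    by (simp add: add_divide_distrib distrib_left)
  then show ?thesis using h2 avg by linarith
qed

lemma ann_lower:
  fixes m k d :: nat
  assumes "k \<le> m" "m \<ge> 1" "d \<ge> 1"
  shows "real ((2*m+1)^d) - real ((2*(m-k)+1)^d) \<le> (real d * real k / real m) * real ((2*m+1)^d)"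
proof -
  obtain n where d: "d = Suc n" using assms by (cases d) auto
  have "real ((2*m+1)^d) - real ((2*(m-k)+1)^d) = (2 * real m + 1) ^ Suc n - (2 * real (m-k) + 1) ^ Suc n"
    unfolding d by (simp only: of_nat_power of_nat_add of_nat_mult of_nat_numeral of_nat_1)
  also have "\<dots> \<le> real (Suc n) * ((2 * real m + 1) - (2 * real (m-k) + 1)) * (2 * real m + 1) ^ n"
    using assms by (intro pow_diff_le) auto
  also have "\<dots> = real d * (2 * real k) * (2 * real m + 1) ^ n" using assms unfolding d by (simp add: of_nat_diff)
  also have "\<dots> \<le> (real d * real k / real m) * ((2 * real m + 1) ^ n * (2 * real m + 1))"
  proof -
    have m: "real m > 0" using assms by simp
    have "real d * (2 * real k) * (2 * real m + 1) ^ n = (real d * real k / real m) * ((2 * real m + 1) ^ n * (2 * real m))"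
      using m by (simp add: field_simps)
    also have "\<dots> \<le> (real d * real k / real m) * ((2 * real m + 1) ^ n * (2 * real m + 1))"
      using m by (intro mult_left_mono) auto
    finally show ?thesis .
  qed
  also have "\<dots> = (real d * real k / real m) * real ((2*m+1)^d)" unfolding d by (simp add: algebra_simps)
  finally show ?thesis .
qed

lemma ann_upper:
  fixes m k d :: nat
  assumes "k \<le> m" "m \<ge> 1" "d \<ge> 1"
  shows "real ((2*(m+k)+1)^d) - real ((2*m+1)^d) \<le> 2^(d-1) * (real d * real k / real m) * real ((2*m+1)^d)"
proof -
  obtain n where d: "d = Suc n" using assms by (cases d) auto
  have m: "real m > 0" using assms by simp
  have "real ((2*(m+k)+1)^d) - real ((2*m+1)^d) = (2 * real (m+k) + 1) ^ Suc n - (2 * real m + 1) ^ Suc n"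
    unfolding d by (simp only: of_nat_power of_nat_add of_nat_mult of_nat_numeral of_nat_1)
  also have "\<dots> \<le> real (Suc n) * ((2 * real (m+k) + 1) - (2 * real m + 1)) * (2 * real (m+k) + 1) ^ n"
    using assms by (intro pow_diff_le) auto
  also have "\<dots> = real d * (2 * real k) * (2 * real (m+k) + 1) ^ n" unfolding d by simp
  also have "\<dots> \<le> real d * (2 * real k) * (2 * (2 * real m + 1)) ^ n"
    using assms by (intro mult_left_mono power_mono) auto
  also have "\<dots> = 2 ^ n * (real d * (2 * real k) * (2 * real m + 1) ^ n)" by (simp only: power_mult_distrib mult_ac)
  also have "\<dots> \<le> 2 ^ n * ((real d * real k / real m) * ((2 * real m + 1) ^ n * (2 * real m + 1)))"
  proof (rule mult_left_mono)
    have "real d * (2 * real k) * (2 * real m + 1) ^ n = (real d * real k / real m) * ((2 * real m + 1) ^ n * (2 * real m))"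
      using m by (simp add: field_simps)
    also have "\<dots> \<le> (real d * real k / real m) * ((2 * real m + 1) ^ n * (2 * real m + 1))"
      using m by (intro mult_left_mono) auto
    finally show "real d * (2 * real k) * (2 * real m + 1) ^ n \<le> (real d * real k / real m) * ((2 * real m + 1) ^ n * (2 * real m + 1))" .
  qed simp
  also have "\<dots> = 2^(d-1) * (real d * real k / real m) * real ((2*m+1)^d)" unfolding d by (simp add: algebra_simps)
  finally show ?thesis .
qed



lemma part_ii:
  fixes \<omega> :: "('d::finite) config" and U0 :: "(int^'d) set" and l l' :: int and m k :: nat and x :: "int^'d"
  assumes fin: "R_den_finite \<eta> \<kappa> \<Delta> \<alpha> \<omega>" and Rk: "real k \<ge> R_den \<eta> \<kappa> \<Delta> \<alpha> \<omega>"
    and kp: "\<kappa> > 0" and dp: "\<Delta> > 0" and ep: "\<eta> > 0" and al: "0 < \<alpha>" "\<alpha> < 1/3"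
    and km: "k \<le> m" and k1: "k \<ge> 1"
    and lm: "2 powr real_of_int l = real m" and lk: "2 powr real_of_int l' = real k"
    and xS: "x \<in> S_inf \<omega>" and xB: "x \<in> linf_ball 0 (r_scale \<kappa> \<Delta> (real k) - real m - real k)"
  shows "(1 - \<alpha>) / (1 + \<alpha>) * sigma \<omega> U0 l x
          - (3 * real CARD('d) * 2 ^ (CARD('d) - 1) / \<eta>) * 2 powr (real_of_int (l' - l))
        \<le> avg \<omega> (sigma \<omega> U0 l') x l \<and>
        avg \<omega> (sigma \<omega> U0 l') x l
        \<le> (1 + \<alpha>) / (1 - \<alpha>) * sigma \<omega> U0 l x
          + (3 * real CARD('d) * 2 ^ (CARD('d) - 1) / \<eta>) * 2 powr (real_of_int (l' - l))"
proof -
  define S where "S = S_inf \<omega>"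
  define U1 where "U1 = S - U0"
  define Y where "Y = linf_ball x (real m) \<inter> S"
  define Nx where "Nx = card Y"
  define Ax where "Ax = card (linf_ball x (real m) \<inter> U1)"
  define Ay where "Ay = (\<lambda>y. card (linf_ball y (real k) \<inter> U1))"
  define Ny where "Ny = (\<lambda>y. card (linf_ball y (real k) \<inter> S))"
  define nk where "nk = real ((2*k+1) ^ CARD('d))"
  define nm where "nm = real ((2*m+1) ^ CARD('d))"
  define P where "P = (2::real) ^ (CARD('d) - 1)"
  define T where "T = real CARD('d) * real k / real m"
  define avgv where "avgv = avg \<omega> (sigma \<omega> U0 l') x l"
  have U1S: "U1 \<subseteq> S" unfolding U1_def by blast
  have sigx: "sigma \<omega> U0 l x = real Ax / real Nx"
    unfolding sigma_def lm Ax_def Nx_def Y_def U1_def S_def ..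
  have sig': "sigma \<omega> U0 l' y = real (Ay y) / real (Ny y)" for y
    unfolding sigma_def lk Ay_def Ny_def U1_def S_def ..
  have avg_eq: "avgv = (\<Sum>y\<in>Y. real (Ay y) / real (Ny y)) / real Nx"
    unfolding avgv_def avg_def lm Y_def[symmetric] S_def[symmetric] Nx_def[symmetric] sig' ..
  have m1: "m \<ge> 1" using k1 km by simp
  have kmr: "real k / real m = 2 powr (real_of_int (l' - l))"
    by (simp add: powr_diff lm lk)
  have cst: "(3 * real CARD('d) * 2 ^ (CARD('d) - 1) / \<eta>) * 2 powr (real_of_int (l' - l)) = 3 * P * T / \<eta>"
    unfolding kmr[symmetric] P_def T_def by (simp add: mult_ac)
  have Rm: "real m \<ge> R_den \<eta> \<kappa> \<Delta> \<alpha> \<omega>" using Rk km by linarith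
  have rsk: "r_scale \<kappa> \<Delta> (real k) \<le> r_scale \<kappa> \<Delta> (real m)" using kp dp k1 km by (intro rscale_mono) auto
  have xball: "x \<in> linf_ball 0 (r_scale \<kappa> \<Delta> (real m))"
    using xB ball_mono[of "r_scale \<kappa> \<Delta> (real k) - real m - real k" "r_scale \<kappa> \<Delta> (real m)" 0] rsk by auto
  have densx: "(1 - \<alpha>) * \<eta> * nm \<le> real Nx"
    using density_at[OF fin Rm kp dp xS xball] unfolding nm_def Nx_def Y_def S_def by (simp add: Int_commute)
  have inW: "w \<in> linf_ball 0 (r_scale \<kappa> \<Delta> (real k))" if "w \<in> linf_ball x (real m + real k)" for w
    using ball_trans[OF xB that] by simp
  have dk: "(1 - \<alpha>) * \<eta> * nk \<le> real (Ny w) \<and> real (Ny w) \<le> (1 + \<alpha>) * \<eta> * nk"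
    if "w \<in> S" "w \<in> linf_ball x (real m + real k)" for w
    using density_at[OF fin Rk kp dp, of w] that inW[OF that(2)] unfolding nk_def Ny_def S_def
    by (simp add: Int_commute)
  have Ypts: "y \<in> S \<and> y \<in> linf_ball x (real m + real k)" if "y \<in> Y" for y
    using that ball_mono[of "real m" "real m + real k" x] unfolding Y_def by auto
  have Nypos: "real (Ny y) > 0" if "y \<in> S" for y
  proof -
    have "y \<in> linf_ball y (real k) \<inter> S" using that ball_self[of "real k" y] by simp
    then have "linf_ball y (real k) \<inter> S \<noteq> {}" by blast
    then show ?thesis unfolding Ny_def using ball_finite[of y "real k"] by (simp add: card_gt_0_iff)
  qed
  have nkpos: "nk > 0" and nmpos: "nm > 0" unfolding nk_def nm_def by simp_all
  have finY: "finite Y" unfolding Y_def using ball_finite by blast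
  have finBU: "finite (linf_ball y r \<inter> X)" for y r X using ball_finite by blast
  have "(1 - \<alpha>) * \<eta> * nm > 0" using al ep nmpos by simp
  then have Nxpos: "real Nx > 0" using densx by linarith
  have Tpos: "T \<ge> 0" unfolding T_def by simp
  have P1: "P \<ge> 1" unfolding P_def by simp
  have dpos: "CARD('d) \<ge> 1" by simp
  define W1 where "W1 = linf_ball x (real (m - k)) \<inter> U1"
  define ann1 where "ann1 = card (linf_ball x (real m) - linf_ball x (real (m - k)))"
  have finW1: "finite W1" unfolding W1_def using finBU by blast
  have sumL: "(\<Sum>y\<in>Y. real (Ay y)) / ((1 + \<alpha>) * \<eta> * nk) \<le> (\<Sum>y\<in>Y. real (Ay y) / real (Ny y))"
    unfolding sum_divide_distrib
  proof (rule sum_mono)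
    fix y assume y: "y \<in> Y"
    have "real (Ny y) \<le> (1 + \<alpha>) * \<eta> * nk" using dk Ypts[OF y] by blast
    then show "real (Ay y) / ((1 + \<alpha>) * \<eta> * nk) \<le> real (Ay y) / real (Ny y)"
      using Nypos[of y] Ypts[OF y] al ep nkpos by (intro divide_left_mono) auto
  qed
  have swapL: "(\<Sum>w\<in>W1. Ny w) \<le> (\<Sum>y\<in>Y. Ay y)"
  proof -
    have "(\<Sum>w\<in>W1. Ny w) = (\<Sum>w\<in>W1. card {y\<in>Y. w \<in> linf_ball y (real k)})"
    proof (rule sum.cong)
      fix w assume w: "w \<in> W1"
      have "{y\<in>Y. w \<in> linf_ball y (real k)} = linf_ball w (real k) \<inter> S"
      proof (intro set_eqI iffI)
        fix y assume "y \<in> {y\<in>Y. w \<in> linf_ball y (real k)}"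
        then show "y \<in> linf_ball w (real k) \<inter> S" unfolding Y_def using ball_sym[of y w "real k"] by blast
      next
        fix y assume y: "y \<in> linf_ball w (real k) \<inter> S"
        have "y \<in> linf_ball x (real (m - k) + real k)"
          using ball_trans[of w x "real (m - k)" y "real k"] w y unfolding W1_def by blast
        then have "y \<in> linf_ball x (real m)" using km by (simp add: of_nat_diff)
        then show "y \<in> {y\<in>Y. w \<in> linf_ball y (real k)}" using y ball_sym[of y w "real k"] unfolding Y_def by blast
      qed
      then show "Ny w = card {y\<in>Y. w \<in> linf_ball y (real k)}" unfolding Ny_def by simp
    qed simp
    also have "\<dots> = (\<Sum>y\<in>Y. card {w\<in>W1. w \<in> linf_ball y (real k)})"
      by (rule sum_card_swap[symmetric, OF finY finW1])
    also have "\<dots> \<le> (\<Sum>y\<in>Y. Ay y)"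
    proof (rule sum_mono)
      fix y assume "y \<in> Y"
      have "{w\<in>W1. w \<in> linf_ball y (real k)} \<subseteq> linf_ball y (real k) \<inter> U1" unfolding W1_def by blast
      then show "card {w\<in>W1. w \<in> linf_ball y (real k)} \<le> Ay y" unfolding Ay_def by (intro card_mono finBU)
    qed
    finally show ?thesis .
  qed
  have L3: "real (card W1) * ((1 - \<alpha>) * \<eta> * nk) \<le> real (\<Sum>w\<in>W1. Ny w)"
  proof -
    have "(\<Sum>w\<in>W1. (1 - \<alpha>) * \<eta> * nk) \<le> (\<Sum>w\<in>W1. real (Ny w))"
    proof (rule sum_mono)
      fix w assume w: "w \<in> W1"
      have "real (m - k) \<le> real (m + k)" by simp
      then have "real (m - k) \<le> real m + real k" by simp
      then have "w \<in> linf_ball x (real m + real k)"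
        using w ball_mono[of "real (m - k)" "real m + real k" x] unfolding W1_def by blast
      moreover have "w \<in> S" using w U1S unfolding W1_def by blast
      ultimately show "(1 - \<alpha>) * \<eta> * nk \<le> real (Ny w)" using dk by blast
    qed
    then show ?thesis by simp
  qed
  have L4: "Ax \<le> card W1 + ann1"
  proof -
    have "linf_ball x (real m) \<inter> U1 \<subseteq> W1 \<union> (linf_ball x (real m) - linf_ball x (real (m - k)))"
      unfolding W1_def by blast
    then have "Ax \<le> card (W1 \<union> (linf_ball x (real m) - linf_ball x (real (m - k))))"
      unfolding Ax_def using finW1 ball_finite by (intro card_mono) auto
    also have "\<dots> \<le> card W1 + ann1" unfolding ann1_def by (rule card_Un_le)
    finally show ?thesis .
  qed
  have L5: "real ann1 \<le> T * nm"
  proof -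
    have sub: "linf_ball x (real (m - k)) \<subseteq> linf_ball x (real m)" by (rule ball_mono) simp
    have "ann1 = (2*m+1)^CARD('d) - (2*(m-k)+1)^CARD('d)"
      unfolding ann1_def using card_Diff_subset[OF ball_finite sub] by (simp add: ball_card)
    moreover have "(2*(m-k)+1)^CARD('d) \<le> (2*m+1)^CARD('d)" by (intro power_mono) auto
    ultimately have "real ann1 = real ((2*m+1)^CARD('d)) - real ((2*(m-k)+1)^CARD('d))"
      by (simp add: of_nat_diff)
    then show ?thesis using ann_lower[OF km m1 dpos] unfolding T_def nm_def by simp
  qed
  have avgL: "(1 - \<alpha>) / (1 + \<alpha>) * ((real Ax - real ann1) / real Nx) \<le> avgv"
  proof -
    have c0: "(1 - \<alpha>) * \<eta> * nk > 0" using al ep nkpos by simp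
    have "real Ax - real ann1 \<le> real (card W1)" using L4 by linarith
    then have "(real Ax - real ann1) * ((1 - \<alpha>) * \<eta> * nk) \<le> real (card W1) * ((1 - \<alpha>) * \<eta> * nk)"
      using c0 by (intro mult_right_mono) auto
    also have "\<dots> \<le> real (\<Sum>y\<in>Y. Ay y)" using L3 swapL by (meson of_nat_le_iff order_trans)
    finally have q: "(real Ax - real ann1) * ((1 - \<alpha>) * \<eta> * nk) \<le> (\<Sum>y\<in>Y. real (Ay y))" by simp
    have "(real Ax - real ann1) * (1 - \<alpha>) / (1 + \<alpha>)
        = (real Ax - real ann1) * ((1 - \<alpha>) * \<eta> * nk) / ((1 + \<alpha>) * \<eta> * nk)"
      using ep nkpos by simp
    also have "\<dots> \<le> (\<Sum>y\<in>Y. real (Ay y)) / ((1 + \<alpha>) * \<eta> * nk)"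
      using q al ep nkpos by (intro divide_right_mono) auto
    also have "\<dots> \<le> (\<Sum>y\<in>Y. real (Ay y) / real (Ny y))" by (rule sumL)
    finally have "(real Ax - real ann1) * (1 - \<alpha>) / (1 + \<alpha>) / real Nx \<le> avgv"
      unfolding avg_eq using Nxpos by (intro divide_right_mono) auto
    moreover have "(real Ax - real ann1) * (1 - \<alpha>) / (1 + \<alpha>) / real Nx = (1 - \<alpha>) / (1 + \<alpha>) * ((real Ax - real ann1) / real Nx)"
      by (simp add: field_simps)
    ultimately show ?thesis by linarith
  qed
  have lower: "(1 - \<alpha>) / (1 + \<alpha>) * (real Ax / real Nx) - 3 * P * T / \<eta> \<le> avgv"
    by (rule lower_arith[OF al ep nmpos densx L5 Tpos P1 avgL])
  define W2 where "W2 = linf_ball x (real (m + k)) \<inter> U1"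
  define ann2 where "ann2 = card (linf_ball x (real (m + k)) - linf_ball x (real m))"
  have finW2: "finite W2" unfolding W2_def using finBU by blast
  have sumU: "(\<Sum>y\<in>Y. real (Ay y) / real (Ny y)) \<le> (\<Sum>y\<in>Y. real (Ay y)) / ((1 - \<alpha>) * \<eta> * nk)"
    unfolding sum_divide_distrib
  proof (rule sum_mono)
    fix y assume y: "y \<in> Y"
    have "(1 - \<alpha>) * \<eta> * nk \<le> real (Ny y)" using dk Ypts[OF y] by blast
    then show "real (Ay y) / real (Ny y) \<le> real (Ay y) / ((1 - \<alpha>) * \<eta> * nk)"
      using Nypos[of y] Ypts[OF y] al ep nkpos by (intro divide_left_mono) auto
  qed
  have swapU: "(\<Sum>y\<in>Y. Ay y) \<le> (\<Sum>w\<in>W2. Ny w)"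
  proof -
    have "(\<Sum>y\<in>Y. Ay y) \<le> (\<Sum>y\<in>Y. card {w\<in>W2. w \<in> linf_ball y (real k)})"
    proof (rule sum_mono)
      fix y assume y: "y \<in> Y"
      have "linf_ball y (real k) \<inter> U1 \<subseteq> {w\<in>W2. w \<in> linf_ball y (real k)}"
      proof
        fix w assume w: "w \<in> linf_ball y (real k) \<inter> U1"
        have "w \<in> linf_ball x (real m + real k)"
          using ball_trans[of y x "real m" w "real k"] w y unfolding Y_def by blast
        then show "w \<in> {w\<in>W2. w \<in> linf_ball y (real k)}" using w unfolding W2_def by simp
      qed
      then show "Ay y \<le> card {w\<in>W2. w \<in> linf_ball y (real k)}" unfolding Ay_def
        using finW2 by (intro card_mono) auto
    qed
    also have "\<dots> = (\<Sum>w\<in>W2. card {y\<in>Y. w \<in> linf_ball y (real k)})"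
      by (rule sum_card_swap[OF finY finW2])
    also have "\<dots> \<le> (\<Sum>w\<in>W2. Ny w)"
    proof (rule sum_mono)
      fix w assume "w \<in> W2"
      have "{y\<in>Y. w \<in> linf_ball y (real k)} \<subseteq> linf_ball w (real k) \<inter> S"
        unfolding Y_def using ball_sym[of _ w "real k"] by blast
      then show "card {y\<in>Y. w \<in> linf_ball y (real k)} \<le> Ny w" unfolding Ny_def by (intro card_mono finBU)
    qed
    finally show ?thesis .
  qed
  have U3: "real (\<Sum>w\<in>W2. Ny w) \<le> real (card W2) * ((1 + \<alpha>) * \<eta> * nk)"
  proof -
    have "(\<Sum>w\<in>W2. real (Ny w)) \<le> (\<Sum>w\<in>W2. (1 + \<alpha>) * \<eta> * nk)"
    proof (rule sum_mono)
      fix w assume w: "w \<in> W2"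
      have "w \<in> linf_ball x (real m + real k)" using w unfolding W2_def by simp
      moreover have "w \<in> S" using w U1S unfolding W2_def by blast
      ultimately show "real (Ny w) \<le> (1 + \<alpha>) * \<eta> * nk" using dk by blast
    qed
    then show ?thesis by simp
  qed
  have U4: "card W2 \<le> Ax + ann2"
  proof -
    have "W2 \<subseteq> (linf_ball x (real m) \<inter> U1) \<union> (linf_ball x (real (m + k)) - linf_ball x (real m))"
      unfolding W2_def by blast
    moreover have fD: "finite (linf_ball x (real (m + k)) - linf_ball x (real m))"
      using ball_finite by (rule finite_Diff)
    ultimately have "card W2 \<le> card ((linf_ball x (real m) \<inter> U1) \<union> (linf_ball x (real (m + k)) - linf_ball x (real m)))"
      by (intro card_mono[OF finite_UnI[OF finBU fD]])
    also have "\<dots> \<le> Ax + ann2" unfolding Ax_def ann2_def by (rule card_Un_le)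
    finally show ?thesis .
  qed
  have U5: "real ann2 \<le> P * T * nm"
  proof -
    have sub: "linf_ball x (real m) \<subseteq> linf_ball x (real (m + k))" by (rule ball_mono) simp
    have "ann2 = (2*(m+k)+1)^CARD('d) - (2*m+1)^CARD('d)"
      unfolding ann2_def using card_Diff_subset[OF ball_finite sub] ball_card[of x "m + k"] ball_card[of x m] by simp
    moreover have "(2*m+1)^CARD('d) \<le> (2*(m+k)+1)^CARD('d)" by (intro power_mono) auto
    ultimately have "real ann2 = real ((2*(m+k)+1)^CARD('d)) - real ((2*m+1)^CARD('d))"
      by (simp add: of_nat_diff)
    then show ?thesis using ann_upper[OF km m1 dpos] unfolding T_def nm_def P_def by simp
  qed
  have avgU: "avgv \<le> (1 + \<alpha>) / (1 - \<alpha>) * ((real Ax + real ann2) / real Nx)"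
  proof -
    have c0: "(1 + \<alpha>) * \<eta> * nk > 0" using al ep nkpos by simp
    have "real (\<Sum>y\<in>Y. Ay y) \<le> real (card W2) * ((1 + \<alpha>) * \<eta> * nk)" using U3 swapU
      by (meson of_nat_le_iff order_trans)
    also have "\<dots> \<le> (real Ax + real ann2) * ((1 + \<alpha>) * \<eta> * nk)"
      using c0 U4 by (intro mult_right_mono) auto
    finally have q: "(\<Sum>y\<in>Y. real (Ay y)) \<le> (real Ax + real ann2) * ((1 + \<alpha>) * \<eta> * nk)" by simp
    have "(\<Sum>y\<in>Y. real (Ay y) / real (Ny y)) \<le> (\<Sum>y\<in>Y. real (Ay y)) / ((1 - \<alpha>) * \<eta> * nk)" by (rule sumU)
    also have "\<dots> \<le> (real Ax + real ann2) * ((1 + \<alpha>) * \<eta> * nk) / ((1 - \<alpha>) * \<eta> * nk)"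
      using q al ep nkpos by (intro divide_right_mono) auto
    also have "\<dots> = (real Ax + real ann2) * (1 + \<alpha>) / (1 - \<alpha>)"
      using ep nkpos by simp
    finally have "avgv \<le> (real Ax + real ann2) * (1 + \<alpha>) / (1 - \<alpha>) / real Nx"
      unfolding avg_eq using Nxpos by (intro divide_right_mono) auto
    moreover have "(real Ax + real ann2) * (1 + \<alpha>) / (1 - \<alpha>) / real Nx = (1 + \<alpha>) / (1 - \<alpha>) * ((real Ax + real ann2) / real Nx)"
      by (simp add: field_simps)
    ultimately show ?thesis by linarith
  qed
  have upper: "avgv \<le> (1 + \<alpha>) / (1 - \<alpha>) * (real Ax / real Nx) + 3 * P * T / \<eta>"
    by (rule upper_arith[OF al ep nmpos densx U5 Tpos P1 avgU])
  show ?thesis using lower upper unfolding sigx cst avgv_def[symmetric] by simp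
qed


theorem lemma4p3:
  fixes U :: "real set"
    and P :: "real \<Rightarrow> ('d::finite) config measure"
    and f_S :: "real \<Rightarrow> real \<Rightarrow> real"
    and \<Delta>_S :: "real \<Rightarrow> real"
    and \<kappa>_reg :: "real \<Rightarrow> real"
    and u \<alpha> :: real
    and \<omega> :: "'d config"
    and U0 :: "(int ^ 'd) set"
    and l l' :: int
  assumes dim: "CARD('d) \<ge> 3"
    and U_interval: "is_interval U" "open U" "U \<noteq> {}"
    and meas: "config_measures U P"
    and P1: "axiom_P1 U P"
    and P2: "axiom_P2 U P"
    and D: "axiom_D U P"
    and S1: "axiom_S1 U P f_S \<Delta>_S"
    and S2: "axiom_S2 U P"
    and u: "u \<in> U"
    and kappa_pos: "\<forall>a. \<kappa>_reg a > 0"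
    and alpha: "0 < \<alpha>" "\<alpha> < 1/3"
    and Sinf_ne: "S_inf \<omega> \<noteq> {}"
    and Sinf_conn: "set_connected (S_inf \<omega>)"
    and Rden_fin: "R_den_finite (eta P u) (\<kappa>_reg \<alpha>) (\<Delta>_S u) \<alpha> \<omega>"
    and U0: "U0 \<subseteq> S_inf \<omega>"
    and ll': "l > l'"
    and scales: "2 powr real_of_int l' \<ge> R_den (eta P u) (\<kappa>_reg \<alpha>) (\<Delta>_S u) \<alpha> \<omega>"
    and rpos: "r_scale (\<kappa>_reg \<alpha>) (\<Delta>_S u) (2 powr real_of_int l')
                 - 2 powr real_of_int l - 2 powr real_of_int l' > 0"
  shows
    "(\<forall>x z. x \<in> S_inf \<omega> \<inter> linf_ball 0 (r_scale (\<kappa>_reg \<alpha>) (\<Delta>_S u) (2 powr real_of_int l)) \<and>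
           z \<in> S_inf \<omega> \<inter> linf_ball 0 (r_scale (\<kappa>_reg \<alpha>) (\<Delta>_S u) (2 powr real_of_int l)) \<and>
           conn_in (S_inf \<omega> \<inter> linf_ball 0 (r_scale (\<kappa>_reg \<alpha>) (\<Delta>_S u) (2 powr real_of_int l))) x z
       \<longrightarrow> \<bar>sigma \<omega> U0 l x - sigma \<omega> U0 l z\<bar>
           \<le> (6 * 2 powr (- real_of_int l) / eta P u)
              * real (graph_dist (S_inf \<omega> \<inter> linf_ball 0 (r_scale (\<kappa>_reg \<alpha>) (\<Delta>_S u) (2 powr real_of_int l))) x z))
     \<and>
     (\<forall>x \<in> S_inf \<omega> \<inter> linf_ball 0 (r_scale (\<kappa>_reg \<alpha>) (\<Delta>_S u) (2 powr real_of_int l')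
                                     - 2 powr real_of_int l - 2 powr real_of_int l').
        (1 - \<alpha>) / (1 + \<alpha>) * sigma \<omega> U0 l x
          - (3 * real CARD('d) * 2 ^ (CARD('d) - 1) / eta P u) * 2 powr (real_of_int (l' - l))
        \<le> avg \<omega> (sigma \<omega> U0 l') x l \<and>
        avg \<omega> (sigma \<omega> U0 l') x l
        \<le> (1 + \<alpha>) / (1 - \<alpha>) * sigma \<omega> U0 l x
          + (3 * real CARD('d) * 2 ^ (CARD('d) - 1) / eta P u) * 2 powr (real_of_int (l' - l)))" (is "?PI \<and> ?PII")
proof -
  have ep: "eta P u > 0"
  proof -
    have "\<forall>u\<in>U. eta P u > 0" using S2 unfolding axiom_S2_def by (rule conjunct1)
    then show ?thesis using u by (rule bspec)
  qed
  have dp: "\<Delta>_S u > 0"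
  proof -
    have "\<forall>u\<in>U. \<Delta>_S u > 0 \<and> (\<exists>R0. \<forall>R\<ge>R0. f_S u R \<ge> ln R powr (1 + \<Delta>_S u)) \<and>
      (\<forall>R\<ge>1. measure (P u) (LU_event1 R) \<ge> 1 - exp (- f_S u R) \<and>
              measure (P u) (LU_event2 R) \<ge> 1 - exp (- f_S u R))" using S1 unfolding axiom_S1_def .
    then show ?thesis using u by blast
  qed
  have kp: "\<kappa>_reg \<alpha> > 0" using kappa_pos by blast
  have Rge1: "R_den (eta P u) (\<kappa>_reg \<alpha>) (\<Delta>_S u) \<alpha> \<omega> \<ge> 1"
  proof -
    have ne: "{R0. density_ok (eta P u) (\<kappa>_reg \<alpha>) (\<Delta>_S u) \<alpha> \<omega> R0} \<noteq> {}"
      using Rden_fin unfolding R_den_finite_def by blast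
    show ?thesis unfolding R_den_def
      by (rule cInf_greatest[OF ne]) (simp add: density_ok_def)
  qed
  have l'0: "l' \<ge> 0"
  proof (rule ccontr)
    assume "\<not> l' \<ge> 0"
    then have "2 powr real_of_int l' < 2 powr 0" by (intro powr_less_mono) auto
    then show False using scales Rge1 by simp
  qed
  have l0: "l \<ge> 0" using l'0 ll' by simp
  define m where "m = (2::nat) ^ nat l"
  define k where "k = (2::nat) ^ nat l'"
  have lm: "2 powr real_of_int l = real m"
  proof -
    have "2 powr real_of_int l = 2 powr real (nat l)" using l0 by simp
    also have "\<dots> = 2 ^ nat l" by (rule powr_realpow) simp
    also have "\<dots> = real m" unfolding m_def by simp
    finally show ?thesis .
  qed
  have lk: "2 powr real_of_int l' = real k"
  proof -
    have "2 powr real_of_int l' = 2 powr real (nat l')" using l'0 by simp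
    also have "\<dots> = 2 ^ nat l'" by (rule powr_realpow) simp
    also have "\<dots> = real k" unfolding k_def by simp
    finally show ?thesis .
  qed
  have km: "k \<le> m" unfolding k_def m_def using ll' by (intro power_increasing) auto
  have k1: "k \<ge> 1" unfolding k_def by simp
  have Rk: "real k \<ge> R_den (eta P u) (\<kappa>_reg \<alpha>) (\<Delta>_S u) \<alpha> \<omega>" using scales lk by simp
  have Rm: "real m \<ge> R_den (eta P u) (\<kappa>_reg \<alpha>) (\<Delta>_S u) \<alpha> \<omega>" using Rk km by linarith
  have pi: ?PI
    using part_i[OF Rden_fin Rm kp dp ep alpha lm, of U0] unfolding lm .
  have pii: ?PII
  proof
    fix x assume x: "x \<in> S_inf \<omega> \<inter> linf_ball 0 (r_scale (\<kappa>_reg \<alpha>) (\<Delta>_S u) (2 powr real_of_int l')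
                                     - 2 powr real_of_int l - 2 powr real_of_int l')"
    show "(1 - \<alpha>) / (1 + \<alpha>) * sigma \<omega> U0 l x
          - (3 * real CARD('d) * 2 ^ (CARD('d) - 1) / eta P u) * 2 powr (real_of_int (l' - l))
        \<le> avg \<omega> (sigma \<omega> U0 l') x l \<and>
        avg \<omega> (sigma \<omega> U0 l') x l
        \<le> (1 + \<alpha>) / (1 - \<alpha>) * sigma \<omega> U0 l x
          + (3 * real CARD('d) * 2 ^ (CARD('d) - 1) / eta P u) * 2 powr (real_of_int (l' - l))"
      using part_ii[OF Rden_fin Rk kp dp ep alpha km k1 lm lk, of x U0] x unfolding lm lk by blast
  qed
  show ?thesis using pi pii by blast
qed

end
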